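(* Assume the setting of the following posterior concentration framework: $f:[0,\infty)\to(0,\infty)$ is continuous, non-increasing, with $\lim_{u\to\infty}f(au)/f(u)=0$ for every $a>1$ and $\int f(\eta'W(P)\eta)\,d\eta<\infty$; $\pi_\theta$ is a continuous probability density on $\mathbb R^p$ with $\pi_\theta(\theta_W(P))>0$; and for $c>0$, \[ \pi_c(\theta\mid P)=\frac{\pi_\theta(\theta)\,f\bigl(\tfrac1cQ_W(\theta;P)\bigr)}{\int\pi_\theta(\vartheta)\,f\bigl(\tfrac1cQ_W(\vartheta;P)\bigr)d\vartheta}. \] Let $\mathcal A$ be a set of actions, $L:\mathcal A\times\mathbb R^p\to\mathbb R$ a loss, and let $\delta_{\pi_c}(P)\in\arg\min_{a\in\mathcal A}\int L(a,\theta)\,d\pi_c(\theta\mid P)$. Suppose that $\mathcal A$ is compact under some metric $d$, that $\sup_{a,\theta}L(a,\theta)<\infty$, that $\sup_\theta|L(a,\theta)-L(a',\theta)|<\lambda\, d(a,a')$ for all $a,a'\in\mathcal A$ and some $\lambda>0$, that $L(a,\cdot)$ is continuous for all $a\in\mathcal A$, and that $a\mapsto L(a,\theta)$ has a unique minimizer over $\mathcal A$ for every $\theta$. Then as $c\to0$, \[ \delta_{\pi_c}(P)\to\arg\min_{a\in\mathcal A}L(a,\theta_W(P)). \]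
   Context: Let $\mathcal P$ be a set of probability distributions; $P\in\mathcal P$ is observed. Fix integers $k>p\ge1$. $Y(P)\in\mathbb R^k$, $X(P)\in\mathbb R^{k\times p}$ of full column rank, and a symmetric positive definite $k\times k$ matrix $W(P)$ are known. Define $Q_W(\theta;P)=(Y(P)-X(P)\theta)'W(P)(Y(P)-X(P)\theta)$ and the pseudo-true value $\theta_W(P)=(X(P)'W(P)X(P))^{-1}X(P)'W(P)Y(P)$, the minimizer of $Q_W(\cdot;P)$. In the paper, $\pi_c(\cdot\mid P)$ is the posterior for $\theta$ under a prior satisfying a minimum-distance sufficiency condition and a rotation-invariant, mean-zero, thin-tailed misspecification prior $\pi_{\eta,c}(\eta\mid\theta)\propto f(\tfrac1c\eta'W(P)\eta)$ for $\eta=Y(P)-X(P)\theta$, which gives exactly the displayed formula. *)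

theory Defs
  imports "HOL-Analysis.Analysis"
begin

definition QW :: "real^'k \<Rightarrow> real^'p^'k \<Rightarrow> real^'k^'k \<Rightarrow> real^'p \<Rightarrow> real" where
  "QW Y X W \<theta> = (Y - X *v \<theta>) \<bullet> (W *v (Y - X *v \<theta>))"

definition thetaW :: "real^'k \<Rightarrow> real^'p^'k \<Rightarrow> real^'k^'k \<Rightarrow> real^'p" where
  "thetaW Y X W = matrix_inv (transpose X ** W ** X) *v (transpose X *v (W *v Y))"

definition post :: "(real \<Rightarrow> real) \<Rightarrow> (real^'p \<Rightarrow> real) \<Rightarrow> real^'k \<Rightarrow> real^'p^'k \<Rightarrow> real^'k^'k
    \<Rightarrow> real \<Rightarrow> real^'p \<Rightarrow> real" where
  "post f prior Y X W c \<theta> =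
     prior \<theta> * f (QW Y X W \<theta> / c) /
     (\<integral>t. prior t * f (QW Y X W t / c) \<partial>lborel)"

definition post_risk :: "('a \<Rightarrow> real^'p \<Rightarrow> real) \<Rightarrow> (real \<Rightarrow> real) \<Rightarrow> (real^'p \<Rightarrow> real)
    \<Rightarrow> real^'k \<Rightarrow> real^'p^'k \<Rightarrow> real^'k^'k \<Rightarrow> real \<Rightarrow> 'a \<Rightarrow> real" where
  "post_risk L f prior Y X W c a = (\<integral>\<theta>. L a \<theta> * post f prior Y X W c \<theta> \<partial>lborel)"

end

theory Submission
  imports Defs
begin


lemma conc:
  fixes prior Q h :: "'b::euclidean_space \<Rightarrow> real" and f :: "real \<Rightarrow> real"
  assumes prior_cont: "continuous_on UNIV prior"
    and prior_nonneg: "\<And>\<theta>. prior \<theta> \<ge> 0"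
    and prior_int: "integrable lborel prior"
    and prior_pos: "prior t0 > 0"
    and Q_cont: "continuous_on UNIV Q"
    and Q_nonneg: "\<And>\<theta>. Q \<theta> \<ge> 0"
    and sep: "\<And>r. r > 0 \<Longrightarrow> \<exists>\<kappa>>0. \<forall>\<theta>. dist \<theta> t0 \<ge> r \<longrightarrow> Q t0 + \<kappa> \<le> Q \<theta>"
    and f_cont: "continuous_on {0..} f"
    and f_pos: "\<And>u. u \<ge> 0 \<Longrightarrow> f u > 0"
    and f_mono: "\<And>u v. 0 \<le> u \<Longrightarrow> u \<le> v \<Longrightarrow> f v \<le> f u"
    and f_thin: "\<And>a. a > 1 \<Longrightarrow> ((\<lambda>u. f (a * u) / f u) \<longlongrightarrow> 0) at_top"
    and h_cont: "continuous_on UNIV h"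
    and h_bdd: "\<And>\<theta>. \<bar>h \<theta>\<bar> \<le> B"
  shows "((\<lambda>c. (\<integral>\<theta>. h \<theta> * (prior \<theta> * f (Q \<theta> / c) / (\<integral>t. prior t * f (Q t / c) \<partial>lborel)) \<partial>lborel)) \<longlongrightarrow> h t0) (at_right 0)"
proof -
  define g where "g c \<theta> = prior \<theta> * f (Q \<theta> / c)" for c \<theta>
  define D where "D c = (\<integral>t. g c t \<partial>lborel)" for c
  define P where "P = (\<integral>t. prior t \<partial>lborel)"
  have P_nonneg: "P \<ge> 0" unfolding P_def using prior_nonneg by simp
  have B_nonneg: "B \<ge> 0" using h_bdd[of t0] by linarith
  have fQc: "continuous_on UNIV (\<lambda>\<theta>. f (Q \<theta> / c))" if "c > 0" for c
    by (rule continuous_on_compose2[OF f_cont, of UNIV "\<lambda>\<theta>. Q \<theta> / c"])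
       (use that Q_nonneg in \<open>auto intro!: continuous_intros Q_cont\<close>)
  have g_meas: "g c \<in> borel_measurable lborel" if "c > 0" for c
    unfolding g_def using fQc[OF that] prior_cont
    by (auto intro!: borel_measurable_continuous_onI continuous_intros)
  have g_nonneg: "g c \<theta> \<ge> 0" if "c > 0" for c \<theta>
    unfolding g_def using prior_nonneg f_pos Q_nonneg that by (simp add: less_imp_le)
  have g_bound: "g c \<theta> \<le> f 0 * prior \<theta>" if "c > 0" for c \<theta>
  proof -
    have "f (Q \<theta> / c) \<le> f 0" using f_mono Q_nonneg that by simp
    then show ?thesis unfolding g_def using prior_nonneg[of \<theta>]
      by (metis mult.commute mult_right_mono)
  qed
  have g_int: "integrable lborel (g c)" if "c > 0" for c
    apply (rule Bochner_Integration.integrable_bound[where f="\<lambda>\<theta>. f 0 * prior \<theta>"])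
    using prior_int g_meas[OF that] g_bound[OF that] g_nonneg[OF that] f_pos[of 0] prior_nonneg
    by (auto intro!: AE_I2 simp: abs_mult)
  have hg_int: "integrable lborel (\<lambda>\<theta>. h \<theta> * g c \<theta>)" if "c > 0" for c
    apply (rule Bochner_Integration.integrable_bound[where f="\<lambda>\<theta>. B * g c \<theta>"])
  proof -
    have hm: "h \<in> borel_measurable lborel"
      using h_cont by (auto intro!: borel_measurable_continuous_onI)
    show "integrable lborel (\<lambda>\<theta>. B * g c \<theta>)" using g_int[OF that] by simp
    show "(\<lambda>\<theta>. h \<theta> * g c \<theta>) \<in> borel_measurable lborel"
      using hm g_meas[OF that] by (rule borel_measurable_times)
    show "AE x in lborel. norm (h x * g c x) \<le> norm (B * g c x)"
      using g_nonneg[OF that] h_bdd B_nonneg by (auto intro!: AE_I2 mult_right_mono simp: abs_mult)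
  qed
  have eq: "(\<integral>\<theta>. h \<theta> * (prior \<theta> * f (Q \<theta> / c) / (\<integral>t. prior t * f (Q t / c) \<partial>lborel)) \<partial>lborel)
      = (\<integral>\<theta>. h \<theta> * g c \<theta> \<partial>lborel) / D c" for c
  proof -
    have "(\<integral>\<theta>. h \<theta> * (prior \<theta> * f (Q \<theta> / c) / (\<integral>t. prior t * f (Q t / c) \<partial>lborel)) \<partial>lborel)
        = (\<integral>\<theta>. h \<theta> * g c \<theta> / D c \<partial>lborel)"
      unfolding g_def D_def by (rule Bochner_Integration.integral_cong) auto
    also have "\<dots> = (\<integral>\<theta>. h \<theta> * g c \<theta> \<partial>lborel) / D c"
      by (rule integral_divide_zero)
    finally show ?thesis .
  qed
  show ?thesis
    unfolding eq
  proof (rule tendstoI)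
    fix \<epsilon> :: real assume "\<epsilon> > 0"
    obtain r where r: "r > 0" "\<And>\<theta>. dist \<theta> t0 < r \<Longrightarrow> \<bar>h \<theta> - h t0\<bar> < \<epsilon>/2"
      using h_cont \<open>\<epsilon> > 0\<close> unfolding continuous_on_iff
      by (metis UNIV_I dist_real_def half_gt_zero)
    obtain \<kappa> where \<kappa>: "\<kappa> > 0" "\<And>\<theta>. dist \<theta> t0 \<ge> r \<Longrightarrow> Q t0 + \<kappa> \<le> Q \<theta>"
      using sep[OF r(1)] by blast
    obtain s1 where s1: "s1 > 0" "\<And>\<theta>. dist \<theta> t0 < s1 \<Longrightarrow> \<bar>Q \<theta> - Q t0\<bar> < \<kappa>/2"
      using Q_cont \<open>\<kappa> > 0\<close> unfolding continuous_on_iff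
      by (metis UNIV_I dist_real_def half_gt_zero)
    obtain s2 where s2: "s2 > 0" "\<And>\<theta>. dist \<theta> t0 < s2 \<Longrightarrow> \<bar>prior \<theta> - prior t0\<bar> < prior t0/2"
      using prior_cont prior_pos unfolding continuous_on_iff
      by (metis UNIV_I dist_real_def half_gt_zero)
    define s where "s = min s1 s2"
    have s_pos: "s > 0" using s1 s2 by (simp add: s_def)
    define u1 where "u1 = Q t0 + \<kappa>/2"
    define u2 where "u2 = Q t0 + \<kappa>"
    have u1_pos: "u1 > 0" using Q_nonneg[of t0] \<kappa> by (simp add: u1_def)
    have u12: "u2 / u1 > 1" using u1_pos \<kappa> by (simp add: u1_def u2_def)
    define V where "V = measure lborel (ball t0 s)"
    have V_pos: "V > 0" unfolding V_def using s_pos by (rule content_ball_pos)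
    define C where "C = prior t0 / 2 * V"
    have C_pos: "C > 0" using V_pos prior_pos by (simp add: C_def)
    have lim: "((\<lambda>c. f (u2 / c) / f (u1 / c)) \<longlongrightarrow> 0) (at_right 0)"
    proof -
      have inv: "filterlim (\<lambda>c::real. u1 * inverse c) at_top (at_right 0)"
        by (rule filterlim_tendsto_pos_mult_at_top[OF tendsto_const u1_pos filterlim_inverse_at_top_right])
      have "((\<lambda>c. f (u2 / u1 * (u1 * inverse c)) / f (u1 * inverse c)) \<longlongrightarrow> 0) (at_right 0)"
        using filterlim_compose[OF f_thin[OF u12] inv] by simp
      moreover have "(\<lambda>c. f (u2 / u1 * (u1 * inverse c)) / f (u1 * inverse c)) = (\<lambda>c. f (u2 / c) / f (u1 / c))"
        using u1_pos by (simp add: field_simps)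
      ultimately show ?thesis by simp
    qed
    define \<gamma> where "\<gamma> = \<epsilon> * C / (2 * (2 * B * P + 1))"
    have \<gamma>_pos: "\<gamma> > 0" unfolding \<gamma>_def using \<open>\<epsilon> > 0\<close> C_pos B_nonneg P_nonneg by (intro divide_pos_pos mult_pos_pos) (auto intro: add_nonneg_pos)
    have ev1: "\<forall>\<^sub>F c in at_right 0. f (u2 / c) / f (u1 / c) < \<gamma>"
      using order_tendstoD(2)[OF lim \<gamma>_pos] .
    have ev2: "\<forall>\<^sub>F c in at_right 0. (c::real) > 0"
      by (simp add: eventually_at_right_less)
    show "\<forall>\<^sub>F c in at_right 0. dist ((\<integral>\<theta>. h \<theta> * g c \<theta> \<partial>lborel) / D c) (h t0) < \<epsilon>"
      using ev1 ev2
    proof eventually_elim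
      case (elim c)
      then have c: "c > 0" and rat: "f (u2 / c) / f (u1 / c) < \<gamma>" by auto
      define f1 where "f1 = f (u1 / c)"
      define f2 where "f2 = f (u2 / c)"
      have f1_pos: "f1 > 0" unfolding f1_def using u1_pos c by (intro f_pos) simp
      have f2_nonneg: "f2 \<ge> 0" unfolding f2_def using u1_pos u12 c
        by (intro less_imp_le[OF f_pos]) (simp add: u2_def u1_def; linarith)
      have ratio: "f2 / f1 < \<gamma>" using rat by (simp add: f1_def f2_def)
      let ?k = "prior t0 / 2 * f1"
      have pw: "indicator (ball t0 s) \<theta> * ?k \<le> g c \<theta>" for \<theta>
      proof (cases "\<theta> \<in> ball t0 s")
        case True
        then have d: "dist \<theta> t0 < s1" "dist \<theta> t0 < s2"
          by (auto simp: s_def dist_commute)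
        have p: "prior t0 / 2 \<le> prior \<theta>" using s2(2)[OF d(2)] by linarith
        have q: "Q \<theta> \<le> u1" using s1(2)[OF d(1)] unfolding u1_def by linarith
        have "f1 \<le> f (Q \<theta> / c)" unfolding f1_def
          using q c Q_nonneg[of \<theta>] by (intro f_mono) (auto intro: divide_right_mono)
        then have "prior t0 / 2 * f1 \<le> prior \<theta> * f (Q \<theta> / c)"
          using p f1_pos prior_pos by (intro mult_mono) auto
        then show ?thesis using True by (simp add: g_def)
      next
        case False
        then show ?thesis using g_nonneg[OF c] by simp
      qed
      have int_ind: "integrable lborel (\<lambda>\<theta>. indicator (ball t0 s) \<theta> * ?k)"
        by (intro integrable_mult_left integrable_real_indicator)
           (auto simp: emeasure_lborel_ball_finite[unfolded infinity_ennreal_def])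
      have "(\<integral>\<theta>. indicator (ball t0 s) \<theta> * ?k \<partial>lborel) = V * ?k"
        unfolding V_def by simp
      moreover have "(\<integral>\<theta>. indicator (ball t0 s) \<theta> * ?k \<partial>lborel) \<le> D c"
        unfolding D_def using int_ind g_int[OF c] pw by (intro integral_mono) auto
      ultimately have D_lb: "C * f1 \<le> D c" unfolding C_def by (simp only: mult_ac)
      have D_pos: "D c > 0" using D_lb C_pos f1_pos
        by (meson less_le_trans mult_pos_pos)
      define N where "N = (\<integral>\<theta>. h \<theta> * g c \<theta> \<partial>lborel)"
      have int_diff: "integrable lborel (\<lambda>\<theta>. (h \<theta> - h t0) * g c \<theta>)"
      proof -
        have "integrable lborel (\<lambda>\<theta>. h \<theta> * g c \<theta> - h t0 * g c \<theta>)"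
          using hg_int[OF c] g_int[OF c] by (intro Bochner_Integration.integrable_diff integrable_mult_right)
        then show ?thesis by (simp add: left_diff_distrib)
      qed
      have int_diff_eq: "(\<integral>\<theta>. (h \<theta> - h t0) * g c \<theta> \<partial>lborel) = N - h t0 * D c"
      proof -
        have "(\<integral>\<theta>. (h \<theta> - h t0) * g c \<theta> \<partial>lborel) = (\<integral>\<theta>. h \<theta> * g c \<theta> - h t0 * g c \<theta> \<partial>lborel)"
          by (simp add: left_diff_distrib)
        also have "\<dots> = N - h t0 * D c"
          unfolding N_def D_def using hg_int[OF c] g_int[OF c]
          by (subst Bochner_Integration.integral_diff) auto
        finally show ?thesis .
      qed
      have int_rhs: "integrable lborel (\<lambda>\<theta>. \<epsilon>/2 * g c \<theta> + 2 * B * f2 * prior \<theta>)"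
        using g_int[OF c] prior_int by (intro Bochner_Integration.integrable_add integrable_mult_right)
      have int_rhs_eq: "(\<integral>\<theta>. \<epsilon>/2 * g c \<theta> + 2 * B * f2 * prior \<theta> \<partial>lborel) = \<epsilon>/2 * D c + 2 * B * f2 * P"
        unfolding D_def P_def using g_int[OF c] prior_int
        by (subst Bochner_Integration.integral_add) auto
      have pw2: "\<bar>(h \<theta> - h t0) * g c \<theta>\<bar> \<le> \<epsilon>/2 * g c \<theta> + 2 * B * f2 * prior \<theta>" for \<theta>
      proof -
        have gn: "g c \<theta> \<ge> 0" using g_nonneg[OF c] .
        have sn: "2 * B * f2 * prior \<theta> \<ge> 0" using B_nonneg f2_nonneg prior_nonneg[of \<theta>] by simp
        have eq1: "\<bar>(h \<theta> - h t0) * g c \<theta>\<bar> = \<bar>h \<theta> - h t0\<bar> * g c \<theta>" using gn by (simp add: abs_mult)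
        show ?thesis
        proof (cases "dist \<theta> t0 < r")
          case True
          then have "\<bar>h \<theta> - h t0\<bar> * g c \<theta> \<le> \<epsilon>/2 * g c \<theta>"
            using r(2)[OF True] gn by (intro mult_right_mono) auto
          then show ?thesis using eq1 sn by linarith
        next
          case False
          then have "Q t0 + \<kappa> \<le> Q \<theta>" using \<kappa>(2) by simp
          then have "u2 / c \<le> Q \<theta> / c" using c by (simp add: u2_def divide_right_mono)
          moreover have "u2 / c \<ge> 0" using c u1_pos \<kappa> by (simp add: u2_def u1_def)
          ultimately have "f (Q \<theta> / c) \<le> f2" unfolding f2_def by (intro f_mono)
          then have gb: "g c \<theta> \<le> prior \<theta> * f2" unfolding g_def using prior_nonneg[of \<theta>]
            by (intro mult_left_mono) auto
          have hb: "\<bar>h \<theta> - h t0\<bar> \<le> 2 * B" using h_bdd[of \<theta>] h_bdd[of t0] by linarith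
          have "\<bar>h \<theta> - h t0\<bar> * g c \<theta> \<le> (2 * B) * (prior \<theta> * f2)"
            using hb gb gn B_nonneg by (intro mult_mono) auto
          moreover have "\<epsilon>/2 * g c \<theta> \<ge> 0" using gn \<open>\<epsilon> > 0\<close> by simp
          ultimately show ?thesis using eq1 by (simp add: algebra_simps)
        qed
      qed
      have main: "\<bar>N - h t0 * D c\<bar> \<le> \<epsilon>/2 * D c + 2 * B * f2 * P"
        using integral_abs_bound_integral[OF int_diff int_rhs pw2] int_diff_eq int_rhs_eq by simp
      have "dist (N / D c) (h t0) = \<bar>N - h t0 * D c\<bar> / D c"
        using D_pos by (simp add: dist_real_def field_simps)
      also have "\<dots> \<le> (\<epsilon>/2 * D c + 2 * B * f2 * P) / D c"
        using main D_pos by (simp add: divide_right_mono)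
      also have "\<dots> = \<epsilon>/2 + 2 * B * P * f2 / D c"
        using D_pos by (simp add: field_simps)
      also have "2 * B * P * f2 / D c \<le> 2 * B * P * f2 / (C * f1)"
        using D_lb C_pos f1_pos B_nonneg P_nonneg f2_nonneg D_pos
        by (intro divide_left_mono) auto
      also have "2 * B * P * f2 / (C * f1) = (2 * B * P / C) * (f2 / f1)"
        by simp
      also have "(2 * B * P / C) * (f2 / f1) \<le> (2 * B * P / C) * \<gamma>"
        using ratio C_pos B_nonneg P_nonneg by (intro mult_left_mono) auto
      also have "(2 * B * P / C) * \<gamma> = \<epsilon>/2 * ((2 * B * P) / (2 * B * P + 1))"
      proof -
        have "B * P \<ge> 0" using B_nonneg P_nonneg by simp
        then have "2 * B * P + 1 \<noteq> 0" by linarith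
        then show ?thesis using C_pos unfolding \<gamma>_def by (simp add: field_simps)
      qed
      also have "\<dots> < \<epsilon>/2"
      proof -
        have bp: "B * P \<ge> 0" using B_nonneg P_nonneg by simp
        have "(2 * B * P) / (2 * B * P + 1) < 1" using bp by (subst divide_less_eq_1_pos) auto
        then show ?thesis using \<open>\<epsilon> > 0\<close>
          by (metis half_gt_zero mult.right_neutral mult_strict_left_mono)
      qed
      finally show ?case unfolding N_def by simp

    qed
  qed
qed


lemma post_basic:
  fixes prior Q :: "'b::euclidean_space \<Rightarrow> real" and f :: "real \<Rightarrow> real"
  assumes prior_cont: "continuous_on UNIV prior"
    and prior_nonneg: "\<And>\<theta>. prior \<theta> \<ge> 0"
    and prior_int: "integrable lborel prior"
    and prior_pos: "prior t0 > 0"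
    and Q_cont: "continuous_on UNIV Q"
    and Q_nonneg: "\<And>\<theta>. Q \<theta> \<ge> 0"
    and f_cont: "continuous_on {0..} f"
    and f_pos: "\<And>u. u \<ge> 0 \<Longrightarrow> f u > 0"
    and f_mono: "\<And>u v. 0 \<le> u \<Longrightarrow> u \<le> v \<Longrightarrow> f v \<le> f u"
    and c: "c > 0"
  shows "integrable lborel (\<lambda>\<theta>. prior \<theta> * f (Q \<theta> / c))"
    and "(\<lambda>\<theta>. prior \<theta> * f (Q \<theta> / c)) \<in> borel_measurable lborel"
    and "(\<integral>\<theta>. prior \<theta> * f (Q \<theta> / c) \<partial>lborel) > 0"
proof -
  define g where "g \<theta> = prior \<theta> * f (Q \<theta> / c)" for \<theta>
  have fQc: "continuous_on UNIV (\<lambda>\<theta>. f (Q \<theta> / c))"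
    by (rule continuous_on_compose2[OF f_cont, of UNIV "\<lambda>\<theta>. Q \<theta> / c"])
       (use c Q_nonneg in \<open>auto intro!: continuous_intros Q_cont\<close>)
  have g_meas: "g \<in> borel_measurable lborel"
    unfolding g_def using fQc prior_cont
    by (auto intro!: borel_measurable_continuous_onI continuous_intros)
  then show "(\<lambda>\<theta>. prior \<theta> * f (Q \<theta> / c)) \<in> borel_measurable lborel" unfolding g_def .
  have g_nonneg: "g \<theta> \<ge> 0" for \<theta>
    unfolding g_def using prior_nonneg f_pos Q_nonneg c by (simp add: less_imp_le)
  have g_bound: "g \<theta> \<le> f 0 * prior \<theta>" for \<theta>
  proof -
    have "f (Q \<theta> / c) \<le> f 0" using f_mono Q_nonneg c by simp
    then show ?thesis unfolding g_def using prior_nonneg[of \<theta>]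
      by (metis mult.commute mult_right_mono)
  qed
  have g_int: "integrable lborel g"
    apply (rule Bochner_Integration.integrable_bound[where f="\<lambda>\<theta>. f 0 * prior \<theta>"])
    using prior_int g_meas g_bound g_nonneg f_pos[of 0] prior_nonneg
    by (auto intro!: AE_I2 simp: abs_mult)
  then show "integrable lborel (\<lambda>\<theta>. prior \<theta> * f (Q \<theta> / c))" unfolding g_def .
  obtain s1 where s1: "s1 > 0" "\<And>\<theta>. dist \<theta> t0 < s1 \<Longrightarrow> \<bar>Q \<theta> - Q t0\<bar> < 1"
    using Q_cont unfolding continuous_on_iff
    by (metis UNIV_I dist_real_def zero_less_one)
  obtain s2 where s2: "s2 > 0" "\<And>\<theta>. dist \<theta> t0 < s2 \<Longrightarrow> \<bar>prior \<theta> - prior t0\<bar> < prior t0/2"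
    using prior_cont prior_pos unfolding continuous_on_iff
    by (metis UNIV_I dist_real_def half_gt_zero)
  define s where "s = min s1 s2"
  have s_pos: "s > 0" using s1 s2 by (simp add: s_def)
  define u1 where "u1 = Q t0 + 1"
  have u1_pos: "u1 > 0" using Q_nonneg[of t0] by (simp add: u1_def)
  define V where "V = measure lborel (ball t0 s)"
  have V_pos: "V > 0" unfolding V_def using s_pos by (rule content_ball_pos)
  define f1 where "f1 = f (u1 / c)"
  have f1_pos: "f1 > 0" unfolding f1_def using u1_pos c by (intro f_pos) simp
  let ?k = "prior t0 / 2 * f1"
  have pw: "indicator (ball t0 s) \<theta> * ?k \<le> g \<theta>" for \<theta>
  proof (cases "\<theta> \<in> ball t0 s")
    case True
    then have d: "dist \<theta> t0 < s1" "dist \<theta> t0 < s2"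
      by (auto simp: s_def dist_commute)
    have p: "prior t0 / 2 \<le> prior \<theta>" using s2(2)[OF d(2)] by linarith
    have q: "Q \<theta> \<le> u1" using s1(2)[OF d(1)] unfolding u1_def by linarith
    have "f1 \<le> f (Q \<theta> / c)" unfolding f1_def
      using q c Q_nonneg[of \<theta>] by (intro f_mono) (auto intro: divide_right_mono)
    then have "prior t0 / 2 * f1 \<le> prior \<theta> * f (Q \<theta> / c)"
      using p f1_pos prior_pos by (intro mult_mono) auto
    then show ?thesis using True by (simp add: g_def)
  next
    case False
    then show ?thesis using g_nonneg by simp
  qed
  have int_ind: "integrable lborel (\<lambda>\<theta>. indicator (ball t0 s) \<theta> * ?k)"
    by (intro integrable_mult_left integrable_real_indicator)
       (auto simp: emeasure_lborel_ball_finite[unfolded infinity_ennreal_def])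
  have "(\<integral>\<theta>. indicator (ball t0 s) \<theta> * ?k \<partial>lborel) = V * ?k"
    unfolding V_def by simp
  moreover have "(\<integral>\<theta>. indicator (ball t0 s) \<theta> * ?k \<partial>lborel) \<le> (\<integral>\<theta>. g \<theta> \<partial>lborel)"
    using int_ind g_int pw by (intro integral_mono) auto
  moreover have "V * ?k > 0" using V_pos f1_pos prior_pos by simp
  ultimately show "(\<integral>\<theta>. prior \<theta> * f (Q \<theta> / c) \<partial>lborel) > 0" unfolding g_def by linarith
qed

lemma risk_lip:
  fixes h1 h2 g :: "'b::euclidean_space \<Rightarrow> real"
  assumes g_int: "integrable lborel g" and g_nonneg: "\<And>\<theta>. g \<theta> \<ge> 0"
    and g_meas: "g \<in> borel_measurable lborel"
    and D_pos: "(\<integral>t. g t \<partial>lborel) > 0"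
    and h1: "continuous_on UNIV h1" "\<And>\<theta>. \<bar>h1 \<theta>\<bar> \<le> B"
    and h2: "continuous_on UNIV h2" "\<And>\<theta>. \<bar>h2 \<theta>\<bar> \<le> B"
    and K: "\<And>\<theta>. \<bar>h1 \<theta> - h2 \<theta>\<bar> \<le> K"
  shows "(\<integral>\<theta>. h2 \<theta> * (g \<theta> / (\<integral>t. g t \<partial>lborel)) \<partial>lborel)
       \<le> (\<integral>\<theta>. h1 \<theta> * (g \<theta> / (\<integral>t. g t \<partial>lborel)) \<partial>lborel) + K"
proof -
  define D where "D = (\<integral>t. g t \<partial>lborel)"
  have B_nonneg: "B \<ge> 0" using h1(2)[of undefined] by linarith
  have hint: "integrable lborel (\<lambda>\<theta>. h \<theta> * g \<theta>)"
    if hc: "continuous_on UNIV h" and hb: "\<And>\<theta>. \<bar>h \<theta>\<bar> \<le> B" for h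
    apply (rule Bochner_Integration.integrable_bound[where f="\<lambda>\<theta>. B * g \<theta>"])
  proof -
    have hm: "h \<in> borel_measurable lborel"
      using hc by (auto intro!: borel_measurable_continuous_onI)
    show "integrable lborel (\<lambda>\<theta>. B * g \<theta>)" using g_int by simp
    show "(\<lambda>\<theta>. h \<theta> * g \<theta>) \<in> borel_measurable lborel"
      using hm g_meas by (rule borel_measurable_times)
    show "AE x in lborel. norm (h x * g x) \<le> norm (B * g x)"
      using g_nonneg hb B_nonneg by (auto intro!: AE_I2 mult_right_mono simp: abs_mult)
  qed
  have eqh: "(\<integral>\<theta>. h \<theta> * (g \<theta> / D) \<partial>lborel) = (\<integral>\<theta>. h \<theta> * g \<theta> \<partial>lborel) / D" for h
  proof -
    have "(\<integral>\<theta>. h \<theta> * (g \<theta> / D) \<partial>lborel) = (\<integral>\<theta>. h \<theta> * g \<theta> / D \<partial>lborel)" by simp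
    also have "\<dots> = (\<integral>\<theta>. h \<theta> * g \<theta> \<partial>lborel) / D" by (rule integral_divide_zero)
    finally show ?thesis .
  qed
  have i1: "integrable lborel (\<lambda>\<theta>. h1 \<theta> * g \<theta>)" using hint h1 by blast
  have i2: "integrable lborel (\<lambda>\<theta>. h2 \<theta> * g \<theta>)" using hint h2 by blast
  have "(\<integral>\<theta>. h2 \<theta> * g \<theta> \<partial>lborel) - (\<integral>\<theta>. h1 \<theta> * g \<theta> \<partial>lborel)
      = (\<integral>\<theta>. h2 \<theta> * g \<theta> - h1 \<theta> * g \<theta> \<partial>lborel)"
    using i1 i2 by simp
  also have "\<dots> \<le> (\<integral>\<theta>. K * g \<theta> \<partial>lborel)"
  proof (rule integral_mono)
    show "integrable lborel (\<lambda>\<theta>. h2 \<theta> * g \<theta> - h1 \<theta> * g \<theta>)" using i1 i2 by simp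
    show "integrable lborel (\<lambda>\<theta>. K * g \<theta>)" using g_int by simp
    fix \<theta>
    have "h2 \<theta> - h1 \<theta> \<le> K" using K[of \<theta>] by linarith
    then have "(h2 \<theta> - h1 \<theta>) * g \<theta> \<le> K * g \<theta>" using g_nonneg[of \<theta>] by (rule mult_right_mono)
    then show "h2 \<theta> * g \<theta> - h1 \<theta> * g \<theta> \<le> K * g \<theta>" by (simp add: left_diff_distrib)
  qed
  also have "\<dots> = K * D" unfolding D_def by simp
  finally have "(\<integral>\<theta>. h2 \<theta> * g \<theta> \<partial>lborel) / D \<le> (\<integral>\<theta>. h1 \<theta> * g \<theta> \<partial>lborel) / D + K"
    using D_pos unfolding D_def[symmetric] by (simp add: field_simps)
  then show ?thesis unfolding D_def[symmetric] eqh .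
qed



lemma inner_mv_transpose:
  fixes X :: "real^'p^'k" and z :: "real^'p" and u :: "real^'k"
  shows "(X *v z) \<bullet> u = z \<bullet> (transpose X *v u)"
proof -
  have "u \<bullet> (X *v z) = (u v* X) \<bullet> z" by (simp add: dot_lmul_matrix)
  then show ?thesis by (simp add: inner_commute)
qed

lemma inner_sym_W:
  fixes W :: "real^'k^'k" and e v :: "real^'k"
  assumes "transpose W = W"
  shows "e \<bullet> (W *v v) = v \<bullet> (W *v e)"
proof -
  have "e \<bullet> (W *v v) = (e v* W) \<bullet> v" by (simp add: dot_lmul_matrix)
  also have "e v* W = transpose W *v e" by simp
  also have "\<dots> = W *v e" using assms by simp
  finally show ?thesis by (simp add: inner_commute)
qed

lemma q_pos:
  fixes X :: "real^'p^'k" and W :: "real^'k^'k"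
  assumes X_rank: "rank X = CARD('p)"
    and W_pd: "\<And>\<eta>. \<eta> \<noteq> 0 \<Longrightarrow> \<eta> \<bullet> (W *v \<eta>) > 0"
    and "z \<noteq> 0"
  shows "(X *v z) \<bullet> (W *v (X *v z)) > 0"
proof -
  have "inj ((*v) X)" using X_rank full_rank_injective by blast
  then have "X *v z \<noteq> 0" using assms(3) by (metis injD matrix_vector_mult_0_right)
  then show ?thesis using W_pd by blast
qed

lemma M_invertible:
  fixes X :: "real^'p^'k" and W :: "real^'k^'k"
  assumes X_rank: "rank X = CARD('p)"
    and W_pd: "\<And>\<eta>. \<eta> \<noteq> 0 \<Longrightarrow> \<eta> \<bullet> (W *v \<eta>) > 0"
  shows "invertible (transpose X ** W ** X)"
proof -
  have "\<forall>x. (transpose X ** W ** X) *v x = 0 \<longrightarrow> x = 0"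
  proof (intro allI impI)
    fix x assume h: "(transpose X ** W ** X) *v x = 0"
    have "(transpose X ** W ** X) *v x = transpose X *v (W *v (X *v x))"
      by (simp only: matrix_vector_mul_assoc matrix_mul_assoc)
    then have "x \<bullet> (transpose X *v (W *v (X *v x))) = 0" using h by simp
    then have "(X *v x) \<bullet> (W *v (X *v x)) = 0" by (simp only: inner_mv_transpose)
    then show "x = 0" using q_pos[OF X_rank W_pd] by (metis less_irrefl)
  qed
  then show ?thesis
    by (simp add: invertible_left_inverse matrix_left_invertible_ker)
qed

lemma QW_decomp:
  fixes X :: "real^'p^'k" and W :: "real^'k^'k" and Y :: "real^'k"
  assumes X_rank: "rank X = CARD('p)"
    and W_pd: "\<And>\<eta>. \<eta> \<noteq> 0 \<Longrightarrow> \<eta> \<bullet> (W *v \<eta>) > 0"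
    and W_sym: "transpose W = W"
  shows "QW Y X W (thetaW Y X W + z) = QW Y X W (thetaW Y X W) + (X *v z) \<bullet> (W *v (X *v z))"
proof -
  define M where "M = transpose X ** W ** X"
  define b where "b = transpose X *v (W *v Y)"
  define t0 where "t0 = thetaW Y X W"
  have t0: "t0 = matrix_inv M *v b" unfolding t0_def thetaW_def M_def b_def ..
  have inv: "invertible M" unfolding M_def by (rule M_invertible[OF X_rank W_pd])
  have MM: "M ** matrix_inv M = mat 1"
    using inv unfolding invertible_def matrix_inv_def by (rule someI_ex[THEN conjunct1])
  have Mt0: "M *v t0 = b" unfolding t0 by (simp add: matrix_vector_mul_assoc MM)
  define e where "e = Y - X *v t0"
  have ortho: "transpose X *v (W *v e) = 0"
  proof -
    have "transpose X *v (W *v e) = b - transpose X *v (W *v (X *v t0))"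
      unfolding e_def b_def by (simp only: matrix_vector_mult_diff_distrib)
    also have "transpose X *v (W *v (X *v t0)) = M *v t0"
      unfolding M_def by (simp only: matrix_vector_mul_assoc matrix_mul_assoc)
    finally show ?thesis using Mt0 by simp
  qed
  define v where "v = X *v z"
  have vWe: "v \<bullet> (W *v e) = 0" unfolding v_def by (simp only: inner_mv_transpose ortho inner_zero_right)
  have eWv: "e \<bullet> (W *v v) = 0" using inner_sym_W[OF W_sym, of e v] vWe by simp
  have "Y - X *v (t0 + z) = e - v" unfolding e_def v_def by (simp add: matrix_vector_right_distrib)
  then have "QW Y X W (t0 + z) = (e - v) \<bullet> (W *v (e - v))" unfolding QW_def by simp
  also have "\<dots> = e \<bullet> (W *v e) - e \<bullet> (W *v v) - v \<bullet> (W *v e) + v \<bullet> (W *v v)"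
    by (simp add: matrix_vector_mult_diff_distrib inner_diff_left inner_diff_right)
  also have "\<dots> = QW Y X W t0 + v \<bullet> (W *v v)"
    using vWe eWv unfolding QW_def e_def by simp
  finally show ?thesis unfolding t0_def v_def .
qed

lemma QW_cont: "continuous_on UNIV (QW Y X W)"
  unfolding QW_def
  by (intro continuous_intros bounded_linear.continuous_on[OF matrix_vector_mul_bounded_linear])

lemma QW_nonneg:
  assumes W_pd: "\<And>\<eta>. \<eta> \<noteq> 0 \<Longrightarrow> \<eta> \<bullet> (W *v \<eta>) > 0"
  shows "QW Y X W \<theta> \<ge> 0"
  unfolding QW_def using W_pd[of "Y - X *v \<theta>"] by (cases "Y - X *v \<theta> = 0") auto

lemma QW_sep:
  fixes X :: "real^'p^'k" and W :: "real^'k^'k" and Y :: "real^'k"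
  assumes X_rank: "rank X = CARD('p)"
    and W_pd: "\<And>\<eta>. \<eta> \<noteq> 0 \<Longrightarrow> \<eta> \<bullet> (W *v \<eta>) > 0"
    and W_sym: "transpose W = W"
    and r: "r > 0"
  shows "\<exists>\<kappa>>0. \<forall>\<theta>. dist \<theta> (thetaW Y X W) \<ge> r \<longrightarrow> QW Y X W (thetaW Y X W) + \<kappa> \<le> QW Y X W \<theta>"
proof -
  define q where "q z = (X *v z) \<bullet> (W *v (X *v z))" for z :: "real^'p"
  have q_cont: "continuous_on UNIV q" unfolding q_def
    by (intro continuous_intros bounded_linear.continuous_on[OF matrix_vector_mul_bounded_linear])
  have q_hom: "q (c *\<^sub>R z) = c\<^sup>2 * q z" for c z
    unfolding q_def by (simp add: matrix_vector_mult_scaleR power2_eq_square)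
  have "\<exists>x\<in>sphere (0::real^'p) 1. \<forall>y\<in>sphere 0 1. q x \<le> q y"
    by (rule continuous_attains_inf) (auto intro: continuous_on_subset[OF q_cont])
  then obtain z0 where z0: "z0 \<in> sphere 0 1" "\<And>y. y \<in> sphere 0 1 \<Longrightarrow> q z0 \<le> q y"
    by blast
  have "z0 \<noteq> 0" using z0(1) by auto
  then have m_pos: "q z0 > 0" unfolding q_def using q_pos[OF X_rank W_pd] by blast
  show ?thesis
  proof (intro exI[of _ "r\<^sup>2 * q z0"] conjI allI impI)
    show "r\<^sup>2 * q z0 > 0" using r m_pos by simp
    fix \<theta> assume d: "dist \<theta> (thetaW Y X W) \<ge> r"
    define z where "z = \<theta> - thetaW Y X W"
    have nz: "norm z \<ge> r" using d unfolding z_def by (simp add: dist_norm)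
    then have nz0: "norm z > 0" using r by linarith
    have "z = norm z *\<^sub>R ((1 / norm z) *\<^sub>R z)" using nz0 by simp
    then have "q z = (norm z)\<^sup>2 * q ((1 / norm z) *\<^sub>R z)" using q_hom by metis
    moreover have "q ((1 / norm z) *\<^sub>R z) \<ge> q z0" using z0(2) nz0 by simp
    ultimately have "q z \<ge> (norm z)\<^sup>2 * q z0" using m_pos by (simp add: mult_left_mono)
    moreover have "(norm z)\<^sup>2 * q z0 \<ge> r\<^sup>2 * q z0"
      using nz r m_pos by (intro mult_right_mono power_mono) auto
    ultimately have "q z \<ge> r\<^sup>2 * q z0" by linarith
    moreover have "\<theta> = thetaW Y X W + z" unfolding z_def by simp
    ultimately show "QW Y X W (thetaW Y X W) + r\<^sup>2 * q z0 \<le> QW Y X W \<theta>"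
      using QW_decomp[OF X_rank W_pd W_sym, of Y z] unfolding q_def by simp
  qed
qed



theorem proposition3:
  fixes Y :: "real^'k" and X :: "real^'p^'k" and W :: "real^'k^'k"
    and f :: "real \<Rightarrow> real" and prior :: "real^'p \<Rightarrow> real"
    and A :: "'a::metric_space set" and L :: "'a \<Rightarrow> real^'p \<Rightarrow> real"
    and \<delta> :: "real \<Rightarrow> 'a" and a0 :: 'a
  assumes kp: "CARD('k) > CARD('p)"
    and X_rank: "rank X = CARD('p)"
    and W_sym: "transpose W = W"
    and W_pd: "\<And>\<eta>. \<eta> \<noteq> 0 \<Longrightarrow> \<eta> \<bullet> (W *v \<eta>) > 0"
    and f_cont: "continuous_on {0..} f"
    and f_pos: "\<And>u. u \<ge> 0 \<Longrightarrow> f u > 0"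
    and f_mono: "\<And>u v. 0 \<le> u \<Longrightarrow> u \<le> v \<Longrightarrow> f v \<le> f u"
    and f_thin: "\<And>a. a > 1 \<Longrightarrow> ((\<lambda>u. f (a * u) / f u) \<longlongrightarrow> 0) at_top"
    and f_int: "integrable lborel (\<lambda>\<eta>::real^'k. f (\<eta> \<bullet> (W *v \<eta>)))"
    and prior_cont: "continuous_on UNIV prior"
    and prior_nonneg: "\<And>\<theta>. prior \<theta> \<ge> 0"
    and prior_prob: "(prior has_integral 1) UNIV"
    and prior_pos: "prior (thetaW Y X W) > 0"
    and A_compact: "compact A"
    and L_bdd: "\<exists>B. \<forall>a\<in>A. \<forall>\<theta>. \<bar>L a \<theta>\<bar> \<le> B"
    and L_lip: "\<exists>lam>0. \<forall>a\<in>A. \<forall>a'\<in>A. \<forall>\<theta>. \<bar>L a \<theta> - L a' \<theta>\<bar> \<le> lam * dist a a'"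
    and L_cont: "\<And>a. a \<in> A \<Longrightarrow> continuous_on UNIV (L a)"
    and L_uniq: "\<And>\<theta>. \<exists>!a. a \<in> A \<and> (\<forall>a'\<in>A. L a \<theta> \<le> L a' \<theta>)"
    and \<delta>_mem: "\<And>c. c > 0 \<Longrightarrow> \<delta> c \<in> A"
    and \<delta>_min: "\<And>c a. c > 0 \<Longrightarrow> a \<in> A \<Longrightarrow>
                   post_risk L f prior Y X W c (\<delta> c) \<le> post_risk L f prior Y X W c a"
    and a0_mem: "a0 \<in> A"
    and a0_min: "\<And>a. a \<in> A \<Longrightarrow> L a0 (thetaW Y X W) \<le> L a (thetaW Y X W)"
  shows "(\<delta> \<longlongrightarrow> a0) (at_right 0)"
proof -
  obtain B where B: "\<And>a \<theta>. a \<in> A \<Longrightarrow> \<bar>L a \<theta>\<bar> \<le> B" using L_bdd by blast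
  obtain lam where lam: "lam > 0" "\<And>a a' \<theta>. a \<in> A \<Longrightarrow> a' \<in> A \<Longrightarrow> \<bar>L a \<theta> - L a' \<theta>\<bar> \<le> lam * dist a a'"
    using L_lip by blast
  define t0 where "t0 = thetaW Y X W"
  define G where "G a = L a t0" for a
  define R where "R c a = post_risk L f prior Y X W c a" for c a
  have prior_meas: "prior \<in> borel_measurable lborel"
    using prior_cont by (auto intro!: borel_measurable_continuous_onI)
  have "integral\<^sup>N lborel prior = ennreal 1"
    by (rule nn_integral_has_integral_lborel[OF _ prior_nonneg prior_prob])
       (use prior_cont in \<open>auto intro!: borel_measurable_continuous_onI\<close>)
  then have prior_int: "integrable lborel prior"
    using prior_meas prior_nonneg by (intro integrableI_nn_integral_finite[where x=1]) auto
  have Q_cont: "continuous_on UNIV (QW Y X W)" by (rule QW_cont)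
  have Q_nonneg: "\<And>\<theta>. QW Y X W \<theta> \<ge> 0" using W_pd by (rule QW_nonneg)
  have sep: "\<And>r. r > 0 \<Longrightarrow> \<exists>\<kappa>>0. \<forall>\<theta>. dist \<theta> t0 \<ge> r \<longrightarrow> QW Y X W t0 + \<kappa> \<le> QW Y X W \<theta>"
    unfolding t0_def using QW_sep[OF X_rank W_pd W_sym] by blast
  have ppos: "prior t0 > 0" unfolding t0_def by (rule prior_pos)
  have conv: "((\<lambda>c. R c a) \<longlongrightarrow> G a) (at_right 0)" if "a \<in> A" for a
    unfolding R_def post_risk_def post_def G_def
    by (rule conc[OF prior_cont prior_nonneg prior_int ppos Q_cont Q_nonneg sep f_cont f_pos f_mono f_thin
          L_cont[OF that] B[OF that]])
  have lipR: "R c b \<le> R c a + lam * dist a b" if "c > 0" "a \<in> A" "b \<in> A" for c a b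
  proof -
    note pb = post_basic[OF prior_cont prior_nonneg prior_int ppos Q_cont Q_nonneg f_cont f_pos f_mono that(1)]
    show ?thesis
      unfolding R_def post_risk_def post_def
    proof (rule risk_lip[where B=B])
      show "integrable lborel (\<lambda>\<theta>. prior \<theta> * f (QW Y X W \<theta> / c))" by (rule pb(1))
      show "(\<lambda>\<theta>. prior \<theta> * f (QW Y X W \<theta> / c)) \<in> borel_measurable lborel" by (rule pb(2))
      show "(\<integral>\<theta>. prior \<theta> * f (QW Y X W \<theta> / c) \<partial>lborel) > 0" by (rule pb(3))
      show "\<And>\<theta>. prior \<theta> * f (QW Y X W \<theta> / c) \<ge> 0"
        using prior_nonneg f_pos Q_nonneg that(1) by (simp add: less_imp_le)
      show "continuous_on UNIV (L a)" "continuous_on UNIV (L b)" using L_cont that by auto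
      show "\<And>\<theta>. \<bar>L a \<theta>\<bar> \<le> B" "\<And>\<theta>. \<bar>L b \<theta>\<bar> \<le> B" using B that by auto
      show "\<And>\<theta>. \<bar>L a \<theta> - L b \<theta>\<bar> \<le> lam * dist a b" using lam(2) that by auto
    qed
  qed
  have G_lip: "\<bar>G a - G b\<bar> \<le> lam * dist a b" if "a \<in> A" "b \<in> A" for a b
    unfolding G_def using lam(2) that by auto
  have ev0: "\<forall>\<^sub>F c in at_right 0. (c::real) > 0"
    by (simp add: eventually_at_right_less)
  show ?thesis
  proof (rule tendstoI)
    fix \<epsilon> :: real assume \<epsilon>: "\<epsilon> > 0"
    define K where "K = A \<inter> {a. \<epsilon> \<le> dist a a0}"
    show "\<forall>\<^sub>F c in at_right 0. dist (\<delta> c) a0 < \<epsilon>"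
    proof (cases "K = {}")
      case True
      show ?thesis using ev0
      proof eventually_elim
        case (elim c)
        then have "\<delta> c \<in> A" by (rule \<delta>_mem)
        then show ?case using True unfolding K_def by force
      qed
    next
      case False
      have K_compact: "compact K" unfolding K_def
        by (intro compact_Int_closed A_compact closed_Collect_le continuous_intros)
      have G_cont: "continuous_on K G"
        unfolding continuous_on_iff
      proof (intro ballI allI impI)
        fix x e assume "x \<in> K" "(e::real) > 0"
        show "\<exists>d>0. \<forall>x'\<in>K. dist x' x < d \<longrightarrow> dist (G x') (G x) < e"
        proof (intro exI[of _ "e / lam"] conjI ballI impI)
          show "e / lam > 0" using \<open>e > 0\<close> lam(1) by simp
          fix x' assume "x' \<in> K" "dist x' x < e / lam"
          then have "lam * dist x' x < e" using lam(1) by (simp add: field_simps)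
          moreover have "\<bar>G x' - G x\<bar> \<le> lam * dist x' x"
            using G_lip \<open>x' \<in> K\<close> \<open>x \<in> K\<close> unfolding K_def by auto
          ultimately show "dist (G x') (G x) < e" by (simp add: dist_real_def)
        qed
      qed
      obtain am where am: "am \<in> K" "\<And>a. a \<in> K \<Longrightarrow> G am \<le> G a"
        using continuous_attains_inf[OF K_compact False G_cont] by blast
      have amA: "am \<in> A" and am_far: "\<epsilon> \<le> dist am a0" using am(1) unfolding K_def by auto
      have gap: "G am > G a0"
      proof (rule ccontr)
        assume "\<not> G am > G a0"
        then have "\<forall>a'\<in>A. L am t0 \<le> L a' t0" using a0_min unfolding G_def t0_def by force
        moreover have "\<forall>a'\<in>A. L a0 t0 \<le> L a' t0" using a0_min unfolding t0_def by blast
        ultimately have "am = a0" using L_uniq[of t0] amA a0_mem by blast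
        then show False using am_far \<epsilon> by simp
      qed
      define \<eta> where "\<eta> = (G am - G a0) / 3"
      have \<eta>: "\<eta> > 0" using gap by (simp add: \<eta>_def)
      have "K \<subseteq> (\<Union>b\<in>K. ball b (\<eta> / lam))" using \<eta> lam(1) by auto
      then obtain T where T: "T \<subseteq> K" "finite T" "K \<subseteq> (\<Union>b\<in>T. ball b (\<eta> / lam))"
        using compactE_image[OF K_compact, of K "\<lambda>b. ball b (\<eta> / lam)"] by blast
      have ev1: "\<forall>\<^sub>F c in at_right 0. \<forall>b\<in>T. dist (R c b) (G b) < \<eta>"
      proof (rule eventually_ball_finite[OF T(2)], rule ballI)
        fix b assume "b \<in> T"
        then have "b \<in> A" using T(1) unfolding K_def by auto
        then show "\<forall>\<^sub>F c in at_right 0. dist (R c b) (G b) < \<eta>"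
          using tendstoD[OF conv \<eta>] by blast
      qed
      have ev2: "\<forall>\<^sub>F c in at_right 0. dist (R c a0) (G a0) < \<eta>"
        using tendstoD[OF conv[OF a0_mem] \<eta>] .
      show ?thesis using ev0 ev1 ev2
      proof eventually_elim
        case (elim c)
        then have c: "c > 0" and e1: "\<And>b. b \<in> T \<Longrightarrow> dist (R c b) (G b) < \<eta>"
          and e2: "dist (R c a0) (G a0) < \<eta>" by auto
        have dA: "\<delta> c \<in> A" using c by (rule \<delta>_mem)
        show ?case
        proof (rule ccontr)
          assume "\<not> dist (\<delta> c) a0 < \<epsilon>"
          then have "\<delta> c \<in> K" using dA unfolding K_def by auto
          then obtain b where b: "b \<in> T" "\<delta> c \<in> ball b (\<eta> / lam)" using T(3) by blast
          have bK: "b \<in> K" using b(1) T(1) by auto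
          have bA: "b \<in> A" using bK unfolding K_def by auto
          have "lam * dist (\<delta> c) b < \<eta>" using b(2) lam(1)
            by (simp add: dist_commute field_simps)
          moreover have "R c b \<le> R c (\<delta> c) + lam * dist (\<delta> c) b" using lipR[OF c dA bA] .
          moreover have "G b - \<eta> < R c b" using e1[OF b(1)] by (simp add: dist_real_def)
          moreover have "G am \<le> G b" using am(2)[OF bK] .
          moreover have "R c a0 < G a0 + \<eta>" using e2 by (simp add: dist_real_def)
          moreover have "R c (\<delta> c) \<le> R c a0" unfolding R_def using \<delta>_min[OF c a0_mem] .
          moreover have "G am = G a0 + 3 * \<eta>" unfolding \<eta>_def by (simp add: field_simps)
          ultimately show False by linarith
        qed
      qed
    qed
  qed
qed


end
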